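(* Let $t$ be a positive integer and let $M$ be a $t$-spike with associated partition $(A_1,\ldots,A_r)$. Then, for every partition $(J,K)$ of $\{1,\dots,r\}$ with $|J| \le |K|$, $$\lambda\left(\bigcup_{j \in J} A_j\right) = \begin{cases} 2|J| & \text{if } |J| < t,\\ 2t-2 & \text{if } |J| \ge t.\end{cases}$$
   Context: For a positive integer $t$, a matroid $M$ is a $t$-spike of order $r$ (where $r\ge t$) if there is a partition $(A_1,\ldots,A_r)$ of $E(M)$ into 2-element sets, called the associated partition, such that, for every $t$-element subset $J\subseteq\{1,\dots,r\}$, the set $\bigcup_{j\in J}A_j$ is both a circuit and a cocircuit of $M$. The connectivity function of a matroid $M$ with ground set $E$ is $\lambda(X) = r(X) + r(E-X) - r(M)$ for $X\subseteq E$. *)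

theory Defs
  imports Main
begin

definition matroid :: "'a set \<Rightarrow> ('a set \<Rightarrow> bool) \<Rightarrow> bool" where
  "matroid E indep \<longleftrightarrow>
     finite E \<and>
     indep {} \<and>
     (\<forall>X. indep X \<longrightarrow> X \<subseteq> E) \<and>
     (\<forall>X Y. indep Y \<and> X \<subseteq> Y \<longrightarrow> indep X) \<and>
     (\<forall>X Y. indep X \<and> indep Y \<and> card X < card Y \<longrightarrow>
        (\<exists>e\<in>Y - X. indep (insert e X)))"

definition mrank :: "('a set \<Rightarrow> bool) \<Rightarrow> 'a set \<Rightarrow> nat" where
  "mrank indep X = Max {card Y | Y. Y \<subseteq> X \<and> indep Y}"

definition basis :: "('a set \<Rightarrow> bool) \<Rightarrow> 'a set \<Rightarrow> bool" where
  "basis indep B \<longleftrightarrow> indep B \<and> (\<forall>X. indep X \<and> B \<subseteq> X \<longrightarrow> X = B)"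

definition circuit :: "'a set \<Rightarrow> ('a set \<Rightarrow> bool) \<Rightarrow> 'a set \<Rightarrow> bool" where
  "circuit E indep C \<longleftrightarrow> C \<subseteq> E \<and> \<not> indep C \<and> (\<forall>x\<in>C. indep (C - {x}))"

definition dual_indep :: "'a set \<Rightarrow> ('a set \<Rightarrow> bool) \<Rightarrow> 'a set \<Rightarrow> bool" where
  "dual_indep E indep X \<longleftrightarrow> X \<subseteq> E \<and> (\<exists>B. basis indep B \<and> X \<inter> B = {})"

definition cocircuit :: "'a set \<Rightarrow> ('a set \<Rightarrow> bool) \<Rightarrow> 'a set \<Rightarrow> bool" where
  "cocircuit E indep C \<longleftrightarrow> circuit E (dual_indep E indep) C"

definition conn :: "'a set \<Rightarrow> ('a set \<Rightarrow> bool) \<Rightarrow> 'a set \<Rightarrow> int" where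
  "conn E indep X = int (mrank indep X) + int (mrank indep (E - X)) - int (mrank indep E)"

definition spike :: "nat \<Rightarrow> nat \<Rightarrow> 'a set \<Rightarrow> ('a set \<Rightarrow> bool) \<Rightarrow> (nat \<Rightarrow> 'a set) \<Rightarrow> bool" where
  "spike t r E indep A \<longleftrightarrow>
     matroid E indep \<and> r \<ge> t \<and>
     (\<forall>i\<in>{1..r}. card (A i) = 2) \<and>
     (\<forall>i\<in>{1..r}. \<forall>j\<in>{1..r}. i \<noteq> j \<longrightarrow> A i \<inter> A j = {}) \<and>
     (\<Union>i\<in>{1..r}. A i) = E \<and>
     (\<forall>J. J \<subseteq> {1..r} \<and> card J = t \<longrightarrow>
        circuit E indep (\<Union>j\<in>J. A j) \<and> cocircuit E indep (\<Union>j\<in>J. A j))"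

end

theory Submission imports Defs begin

lemma m_fin: "matroid E indep \<Longrightarrow> finite E" by (simp add: matroid_def)
lemma m_sub: "matroid E indep \<Longrightarrow> indep X \<Longrightarrow> X \<subseteq> E" by (simp add: matroid_def)
lemma m_empty: "matroid E indep \<Longrightarrow> indep {}" by (simp add: matroid_def)
lemma m_down: "matroid E indep \<Longrightarrow> indep Y \<Longrightarrow> X \<subseteq> Y \<Longrightarrow> indep X"
  unfolding matroid_def by (metis (no_types))
lemma m_aug: "matroid E indep \<Longrightarrow> indep X \<Longrightarrow> indep Y \<Longrightarrow> card X < card Y \<Longrightarrow>
   \<exists>e\<in>Y - X. indep (insert e X)"
  unfolding matroid_def by simp
lemma m_finI: "matroid E indep \<Longrightarrow> indep X \<Longrightarrow> finite X"
  using m_fin[of E indep] m_sub[of E indep X] finite_subset by simp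

lemma rank_set_fin:
  assumes "matroid E indep"
  shows "finite {card Y | Y. Y \<subseteq> X \<and> indep Y}"
proof -
  have "{card Y | Y. Y \<subseteq> X \<and> indep Y} \<subseteq> card ` Pow E"
    using m_sub[OF assms] by blast
  thus ?thesis using m_fin[OF assms] finite_subset by blast
qed

lemma rank_ge:
  assumes "matroid E indep" "indep Y" "Y \<subseteq> X"
  shows "card Y \<le> mrank indep X"
  unfolding mrank_def using assms rank_set_fin[OF assms(1)] by (intro Max_ge) auto

lemma rank_obtain:
  assumes "matroid E indep"
  shows "\<exists>Y. Y \<subseteq> X \<and> indep Y \<and> card Y = mrank indep X"
proof -
  have "card {} \<in> {card Y | Y. Y \<subseteq> X \<and> indep Y}" by (rule CollectI, rule exI[of _ "{}"]) (simp add: m_empty[OF assms])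
  hence ne: "{card Y | Y. Y \<subseteq> X \<and> indep Y} \<noteq> {}" by (rule ex_in_conv[THEN iffD1, OF exI])
  have "mrank indep X \<in> {card Y | Y. Y \<subseteq> X \<and> indep Y}"
    unfolding mrank_def using Max_in[OF rank_set_fin[OF assms] ne] .
  thus ?thesis by (simp only: mem_Collect_eq) (metis (no_types, lifting))
qed

lemma rank_mono:
  assumes "matroid E indep" "X \<subseteq> Z"
  shows "mrank indep X \<le> mrank indep Z"
proof -
  obtain Y where Y: "Y \<subseteq> X" "indep Y" "card Y = mrank indep X" using rank_obtain[OF assms(1), of X] by blast
  have "Y \<subseteq> Z" using Y(1) assms(2) by blast
  thus ?thesis using rank_ge[OF assms(1) Y(2)] Y(3) by simp
qed

lemma rank_indep:
  assumes "matroid E indep" "indep X"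
  shows "mrank indep X = card X"
proof -
  obtain Y where "Y \<subseteq> X" "indep Y" "card Y = mrank indep X" using rank_obtain[OF assms(1), of X] by blast
  moreover have "finite X" using m_finI assms by blast
  ultimately have "mrank indep X \<le> card X" using card_mono[of X] by metis
  thus ?thesis using rank_ge[OF assms(1,2), of X] by simp
qed

lemma rank_insert:
  assumes "matroid E indep"
  shows "mrank indep (insert e X) \<le> mrank indep X + 1"
proof -
  obtain Y where Y: "Y \<subseteq> insert e X" "indep Y" "card Y = mrank indep (insert e X)"
    using rank_obtain[OF assms, of "insert e X"] by blast
  have i: "indep (Y - {e})" using m_down[OF assms Y(2)] by blast
  have "Y - {e} \<subseteq> X" using Y(1) by blast
  hence "card (Y - {e}) \<le> mrank indep X" using rank_ge[OF assms i] by blast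
  moreover have "card Y \<le> card (Y - {e}) + 1"
    using m_finI[OF assms Y(2)] card_Diff_singleton_if[of Y e] by (cases "e \<in> Y") simp_all
  ultimately show ?thesis using Y by linarith
qed

lemma rank_extend:
  assumes "matroid E indep"
  shows "indep I \<Longrightarrow> I \<subseteq> X \<Longrightarrow> \<exists>W. I \<subseteq> W \<and> W \<subseteq> X \<and> indep W \<and> card W = mrank indep X"
proof (induction "mrank indep X - card I" arbitrary: I rule: less_induct)
  case less
  obtain Y where Y: "Y \<subseteq> X" "indep Y" "card Y = mrank indep X" using rank_obtain[OF assms, of X] by blast
  have le: "card I \<le> mrank indep X" using rank_ge[OF assms less.prems] .
  show ?case
  proof (cases "card I = mrank indep X")
    case True
    hence "I \<subseteq> I \<and> I \<subseteq> X \<and> indep I \<and> card I = mrank indep X" using less.prems by simp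
    thus ?thesis by (rule exI)
  next
    case False
    hence "card I < card Y" using le Y by simp
    then obtain e where e: "e \<in> Y - I" "indep (insert e I)" using m_aug[OF assms less.prems(1) Y(2)] by blast
    have "card (insert e I) = card I + 1" using e m_finI[OF assms less.prems(1)] by simp
    hence "mrank indep X - card (insert e I) < mrank indep X - card I" using False le by simp
    moreover have "insert e I \<subseteq> X" using e Y less.prems by blast
    ultimately have "\<exists>W. insert e I \<subseteq> W \<and> W \<subseteq> X \<and> indep W \<and> card W = mrank indep X"
      using less.hyps[OF _ e(2)] by simp
    then obtain W where "insert e I \<subseteq> W" "W \<subseteq> X" "indep W" "card W = mrank indep X" by blast
    hence "I \<subseteq> W \<and> W \<subseteq> X \<and> indep W \<and> card W = mrank indep X" by blast
    thus ?thesis by (rule exI)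
  qed
qed

lemma rank_closure:
  assumes "matroid E indep" "indep I" "I \<subseteq> X" "\<not> indep (insert e I)"
  shows "mrank indep (insert e X) = mrank indep X"
proof -
  obtain W where W: "I \<subseteq> W" "W \<subseteq> insert e X" "indep W" "card W = mrank indep (insert e X)"
    using rank_extend[OF assms(1,2), of "insert e X"] assms(3) by blast
  have "e \<notin> W" using W assms(4) m_down[OF assms(1) W(3)] by blast
  hence "W \<subseteq> X" using W by blast
  hence "mrank indep (insert e X) \<le> mrank indep X" using rank_ge[OF assms(1) W(3)] W by simp
  thus ?thesis using rank_mono[OF assms(1), of X "insert e X"] by (simp add: subset_insertI)
qed

lemma rank_closure_mono:
  assumes "matroid E indep" "mrank indep (insert e X) = mrank indep X" "X \<subseteq> Z"
  shows "mrank indep (insert e Z) = mrank indep Z"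
proof -
  obtain I where I: "I \<subseteq> X" "indep I" "card I = mrank indep X" using rank_obtain[OF assms(1), of X] by blast
  show ?thesis
  proof (cases "indep (insert e I)")
    case True
    show ?thesis
    proof (cases "e \<in> I")
      case True thus ?thesis using I assms(3) by (simp add: insert_absorb subset_iff)
    next
      case False
      have "insert e I \<subseteq> insert e X" using I(1) by blast
      hence "card (insert e I) \<le> mrank indep (insert e X)" using rank_ge[OF assms(1) True] by simp
      moreover have "card (insert e I) = card I + 1" using False m_finI[OF assms(1) I(2)] by simp
      ultimately show ?thesis using I assms(2) by simp
    qed
  next
    case False
    have "I \<subseteq> Z" using I(1) assms(3) by blast
    thus ?thesis using rank_closure[OF assms(1) I(2) _ False] by simp
  qed
qed

lemma basis_card:
  assumes "matroid E indep" "basis indep B"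
  shows "mrank indep E = card B"
proof -
  have Bi: "indep B" using assms(2) basis_def by blast
  obtain Y where Y: "Y \<subseteq> E" "indep Y" "card Y = mrank indep E" using rank_obtain[OF assms(1), of E] by blast
  have "\<not> card B < card Y"
  proof
    assume "card B < card Y"
    then obtain e where "e \<in> Y - B" "indep (insert e B)" using m_aug[OF assms(1) Bi Y(2)] by blast
    hence "indep (insert e B) \<and> B \<subseteq> insert e B" by blast
    hence "insert e B = B" using assms(2) unfolding basis_def by blast
    thus False using \<open>e \<in> Y - B\<close> by blast
  qed
  moreover have "card B \<le> mrank indep E" using rank_ge[OF assms(1) Bi m_sub[OF assms(1) Bi]] .
  ultimately show ?thesis using Y by simp
qed

lemma basisI:
  assumes "matroid E indep" "indep I" "card I = mrank indep E"
  shows "basis indep I"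
  unfolding basis_def
proof (intro conjI allI impI)
  fix X assume X: "indep X \<and> I \<subseteq> X"
  have Xi: "indep X" using X by simp
  have "card X \<le> mrank indep E" using rank_ge[OF assms(1) Xi m_sub[OF assms(1) Xi]] .
  moreover have "finite X" using m_finI[OF assms(1) Xi] .
  ultimately show "X = I" using X assms(3) card_seteq[of X I] by simp
qed (use assms in simp)


lemma circuit_rank:
  assumes "matroid E indep" "circuit E indep C"
  shows "mrank indep C + 1 = card C"
proof -
  have C: "C \<subseteq> E" "\<not> indep C" "\<forall>x\<in>C. indep (C - {x})" using assms(2) unfolding circuit_def by auto
  have fin: "finite C" using C(1) m_fin[OF assms(1)] finite_subset by blast
  have "C \<noteq> {}" using C(2) m_empty[OF assms(1)] by blast
  then obtain x where x: "x \<in> C" by blast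
  have "indep (C - {x})" using C(3) x by blast
  hence "card (C - {x}) \<le> mrank indep C" using rank_ge[OF assms(1)] by blast
  hence ge: "card C \<le> mrank indep C + 1" using x fin by (simp add: card_Diff_singleton_if)
  obtain Y where Y: "Y \<subseteq> C" "indep Y" "card Y = mrank indep C" using rank_obtain[OF assms(1), of C] by blast
  have "Y \<noteq> C" using Y C by blast
  hence "card Y < card C" using Y fin by (meson psubsetI psubset_card_mono)
  thus ?thesis using ge Y by simp
qed

lemma cocircuit_lt:
  assumes "matroid E indep" "cocircuit E indep D"
  shows "mrank indep (E - D) < mrank indep E"
proof (rule ccontr)
  assume "\<not> ?thesis"
  hence eq: "mrank indep (E - D) = mrank indep E" using rank_mono[OF assms(1), of "E - D" E] by auto
  obtain I where I: "I \<subseteq> E - D" "indep I" "card I = mrank indep (E - D)" using rank_obtain[OF assms(1), of "E - D"] by blast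
  have "basis indep I" using basisI[OF assms(1) I(2)] I eq by simp
  moreover have "D \<subseteq> E" using assms(2) unfolding cocircuit_def circuit_def by blast
  ultimately have "dual_indep E indep D" unfolding dual_indep_def using I by blast
  thus False using assms(2) unfolding cocircuit_def circuit_def by blast
qed

lemma cocircuit_ge:
  assumes "matroid E indep" "cocircuit E indep D" "x \<in> D"
  shows "mrank indep E \<le> mrank indep (insert x (E - D))"
proof -
  have "dual_indep E indep (D - {x})" using assms(2,3) unfolding cocircuit_def circuit_def by blast
  then obtain B where B: "basis indep B" "(D - {x}) \<inter> B = {}" unfolding dual_indep_def by blast
  have Bi: "indep B" using B unfolding basis_def by blast
  have "B \<subseteq> insert x (E - D)" using m_sub[OF assms(1) Bi] B by blast
  thus ?thesis using rank_ge[OF assms(1) Bi] basis_card[OF assms(1) B(1)] by simp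
qed

lemma cocircuit_disj:
  assumes "matroid E indep" "cocircuit E indep D" "x \<in> D" "X \<subseteq> D - {x}"
  shows "mrank indep (E - X) = mrank indep E"
proof -
  have "dual_indep E indep (D - {x})" using assms(2,3) unfolding cocircuit_def circuit_def by blast
  then obtain B where B: "basis indep B" "(D - {x}) \<inter> B = {}" unfolding dual_indep_def by blast
  have Bi: "indep B" using B unfolding basis_def by blast
  have "B \<subseteq> E - X" using m_sub[OF assms(1) Bi] B assms(4) by blast
  hence "mrank indep E \<le> mrank indep (E - X)"
    using rank_ge[OF assms(1) Bi] basis_card[OF assms(1) B(1)] by simp
  thus ?thesis using rank_mono[OF assms(1), of "E - X" E] by auto
qed


lemma sp_matroid: "spike t r E indep A \<Longrightarrow> matroid E indep" by (simp add: spike_def)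

lemma sp_p1: assumes "spike t r E indep A" shows "matroid E indep"
  using assms unfolding spike_def by (elim conjE) assumption

lemma sp_p2: assumes "spike t r E indep A" shows "r \<ge> t"
  using assms unfolding spike_def by (elim conjE) assumption

lemma sp_p3: assumes "spike t r E indep A" shows "\<forall>i\<in>{1..r}. card (A i) = 2"
  using assms unfolding spike_def by (elim conjE) assumption

lemma sp_p4: assumes "spike t r E indep A" shows "\<forall>i\<in>{1..r}. \<forall>j\<in>{1..r}. i \<noteq> j \<longrightarrow> A i \<inter> A j = {}"
  using assms unfolding spike_def by (elim conjE) assumption

lemma sp_p5: assumes "spike t r E indep A" shows "(\<Union>i\<in>{1..r}. A i) = E"
  using assms unfolding spike_def by (elim conjE) assumption

lemma sp_p6: assumes "spike t r E indep A" shows "\<forall>J. J \<subseteq> {1..r} \<and> card J = t \<longrightarrow> circuit E indep (\<Union>j\<in>J. A j) \<and> cocircuit E indep (\<Union>j\<in>J. A j)"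
  using assms unfolding spike_def by (elim conjE) assumption

lemma sp_leg: "spike t r E indep A \<Longrightarrow> i \<in> {1..r} \<Longrightarrow> card (A i) = 2"
  using sp_p3 by blast
lemma sp_dj: "spike t r E indep A \<Longrightarrow> i \<in> {1..r} \<Longrightarrow> j \<in> {1..r} \<Longrightarrow> i \<noteq> j \<Longrightarrow> A i \<inter> A j = {}"
  using sp_p4 by blast
lemma sp_circ: "spike t r E indep A \<Longrightarrow> J \<subseteq> {1..r} \<Longrightarrow> card J = t \<Longrightarrow> circuit E indep (\<Union>j\<in>J. A j)"
  using sp_p6 by blast
lemma sp_cocirc: "spike t r E indep A \<Longrightarrow> J \<subseteq> {1..r} \<Longrightarrow> card J = t \<Longrightarrow> cocircuit E indep (\<Union>j\<in>J. A j)"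
  using sp_p6 by blast

lemma sp_card:
  assumes "spike t r E indep A" "S \<subseteq> {1..r}"
  shows "card (\<Union>j\<in>S. A j) = 2 * card S"
proof -
  have fin: "finite S" using assms(2) finite_subset by blast
  have c: "\<forall>i\<in>S. card (A i) = 2" using assms(2) sp_leg[OF assms(1)] by blast
  have "\<forall>i\<in>S. finite (A i)" using c by (metis card.infinite zero_neq_numeral)
  moreover have "\<forall>i\<in>S. \<forall>j\<in>S. i \<noteq> j \<longrightarrow> A i \<inter> A j = {}" using assms(2) sp_dj[OF assms(1)] by blast
  ultimately have "card (\<Union>j\<in>S. A j) = (\<Sum>i\<in>S. card (A i))" using card_UN_disjoint[OF fin] by blast
  also have "\<dots> = 2 * card S" using c by simp
  finally show ?thesis .
qed

lemma sp_disj: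
  assumes "spike t r E indep A" "S \<subseteq> {1..r}" "T \<subseteq> {1..r}" "S \<inter> T = {}"
  shows "(\<Union>j\<in>S. A j) \<inter> (\<Union>j\<in>T. A j) = {}"
proof -
  have "A i \<inter> A j = {}" if "i \<in> S" "j \<in> T" for i j
    using sp_dj[OF assms(1), of i j] that assms(2-4) by blast
  thus ?thesis by blast
qed

lemma sp_compl:
  assumes "spike t r E indep A" "S \<subseteq> {1..r}"
  shows "E - (\<Union>j\<in>S. A j) = (\<Union>j\<in>{1..r} - S. A j)"
proof -
  have E: "E = (\<Union>j\<in>{1..r}. A j)" using sp_p5[OF assms(1)] by simp
  have d: "(\<Union>j\<in>S. A j) \<inter> (\<Union>j\<in>{1..r} - S. A j) = {}" using sp_disj[OF assms(1,2), of "{1..r} - S"] by blast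
  have "(\<Union>j\<in>{1..r}. A j) = (\<Union>j\<in>S. A j) \<union> (\<Union>j\<in>{1..r} - S. A j)" using assms(2) by blast
  thus ?thesis using E d by blast
qed

lemma sp_sub:
  assumes "spike t r E indep A" "S \<subseteq> {1..r}"
  shows "(\<Union>j\<in>S. A j) \<subseteq> E"
  using sp_p5[OF assms(1)] assms(2) by blast

lemma up_inc:
  assumes sp: "spike t r E indep A" and t: "t > 0" and S: "S \<subseteq> {1..r}" and j: "j \<in> {1..r}" "j \<notin> S"
    and c: "t - 1 \<le> card S"
  shows "mrank indep (\<Union>i\<in>insert j S. A i) \<le> mrank indep (\<Union>i\<in>S. A i) + 1"
proof -
  have M: "matroid E indep" using sp_p1[OF sp] .
  obtain L where L: "L \<subseteq> S" "card L = t - 1" using c obtain_subset_with_card_n by metis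
  have finS: "finite S" using S finite_subset by blast
  have jL: "j \<notin> L" using L j by blast
  have "card (insert j L) = t" using L t jL finite_subset[OF L(1) finS] by simp
  moreover have "insert j L \<subseteq> {1..r}" using L S j by blast
  ultimately have C: "circuit E indep (\<Union>i\<in>insert j L. A i)" using sp_circ[OF sp] by blast
  have "card (A j) = 2" using sp_leg[OF sp] j by blast
  then obtain a b where ab: "A j = {a, b}" "a \<noteq> b" by (meson card_2_iff)
  have bL: "b \<notin> (\<Union>i\<in>L. A i)" using sp_disj[OF sp, of "{j}" L] L S j ab by auto
  have eqC: "(\<Union>i\<in>insert j L. A i) - {b} = insert a (\<Union>i\<in>L. A i)" using ab bL by auto
  have bC: "b \<in> (\<Union>i\<in>insert j L. A i)" using ab by auto
  have "indep ((\<Union>i\<in>insert j L. A i) - {b})" using C bC unfolding circuit_def by blast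
  hence Ii: "indep (insert a (\<Union>i\<in>L. A i))" using eqC by simp
  have "insert b (insert a (\<Union>i\<in>L. A i)) = (\<Union>i\<in>insert j L. A i)"
    using insert_Diff[OF bC] eqC by metis
  hence nI: "\<not> indep (insert b (insert a (\<Union>i\<in>L. A i)))" using C unfolding circuit_def by simp
  have sub: "insert a (\<Union>i\<in>L. A i) \<subseteq> insert a (\<Union>i\<in>S. A i)" using L by blast
  have "mrank indep (insert b (insert a (\<Union>i\<in>S. A i))) = mrank indep (insert a (\<Union>i\<in>S. A i))"
    using rank_closure[OF M Ii sub nI] .
  moreover have "(\<Union>i\<in>insert j S. A i) = insert b (insert a (\<Union>i\<in>S. A i))" using ab by auto
  ultimately show ?thesis using rank_insert[OF M] by simp
qed

lemma low_inc:
  assumes sp: "spike t r E indep A" and t: "t > 0" and S: "S \<subseteq> {1..r}" and j: "j \<in> {1..r}" "j \<notin> S"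
    and c: "t - 1 \<le> card ({1..r} - S - {j})"
  shows "mrank indep (\<Union>i\<in>S. A i) + 1 \<le> mrank indep (\<Union>i\<in>insert j S. A i)"
proof -
  have M: "matroid E indep" using sp_p1[OF sp] .
  obtain L where L: "L \<subseteq> {1..r} - S - {j}" "card L = t - 1" using c obtain_subset_with_card_n by metis
  have finL: "finite L" using L finite_subset by (metis finite_Diff finite_atLeastAtMost)
  have jL: "j \<notin> L" using L j by blast
  have "card (insert j L) = t" using L t jL finL by simp
  moreover have "insert j L \<subseteq> {1..r}" using L j by blast
  ultimately have D: "cocircuit E indep (\<Union>i\<in>insert j L. A i)" using sp_cocirc[OF sp] by blast
  have "card (A j) = 2" using sp_leg[OF sp] j by blast
  then obtain a where a: "a \<in> A j" by fastforce
  let ?D = "(\<Union>i\<in>insert j L. A i)"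
  have aD: "a \<in> ?D" using a by blast
  have disj: "(\<Union>i\<in>S. A i) \<inter> ?D = {}" using sp_disj[OF sp S, of "insert j L"] L j by blast
  have subE: "(\<Union>i\<in>S. A i) \<subseteq> E - ?D" using disj sp_sub[OF sp S] by blast
  have "mrank indep (insert a (\<Union>i\<in>S. A i)) \<noteq> mrank indep (\<Union>i\<in>S. A i)"
  proof
    assume "mrank indep (insert a (\<Union>i\<in>S. A i)) = mrank indep (\<Union>i\<in>S. A i)"
    hence "mrank indep (insert a (E - ?D)) = mrank indep (E - ?D)" using rank_closure_mono[OF M _ subE] by blast
    thus False using cocircuit_lt[OF M D] cocircuit_ge[OF M D aD] by simp
  qed
  hence "mrank indep (\<Union>i\<in>S. A i) + 1 \<le> mrank indep (insert a (\<Union>i\<in>S. A i))"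
    using rank_mono[OF M, of "\<Union>i\<in>S. A i" "insert a (\<Union>i\<in>S. A i)"] by fastforce
  also have "\<dots> \<le> mrank indep (\<Union>i\<in>insert j S. A i)" using rank_mono[OF M] a by (intro rank_mono[OF M]) auto
  finally show ?thesis .
qed


lemma main_rank:
  assumes sp: "spike t r E indep A" and t: "t > 0"
  shows "S \<subseteq> {1..r} \<Longrightarrow> t \<le> card S \<Longrightarrow> card S + t \<le> r + 1 \<Longrightarrow>
         mrank indep (\<Union>i\<in>S. A i) = card S + t - 1"
proof (induction "card S" arbitrary: S rule: less_induct)
  case less
  have M: "matroid E indep" using sp_p1[OF sp] .
  have finS: "finite S" using less.prems(1) finite_subset by blast
  show ?case
  proof (cases "card S = t")
    case True
    have C: "circuit E indep (\<Union>i\<in>S. A i)" using sp_circ[OF sp less.prems(1) True] .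
    have "mrank indep (\<Union>i\<in>S. A i) + 1 = 2 * card S"
      using circuit_rank[OF M C] sp_card[OF sp less.prems(1)] by simp
    thus ?thesis using True by simp
  next
    case False
    hence gt: "card S > t" using less.prems(2) by simp
    hence "S \<noteq> {}" by auto
    then obtain j where j: "j \<in> S" by blast
    define S' where "S' = S - {j}"
    have cS': "card S' = card S - 1" unfolding S'_def using j finS by simp
    have S'sub: "S' \<subseteq> {1..r}" unfolding S'_def using less.prems(1) by blast
    have jS': "j \<notin> S'" unfolding S'_def by blast
    have jr: "j \<in> {1..r}" using j less.prems(1) by blast
    have SS: "insert j S' = S" unfolding S'_def using j by blast
    have IH: "mrank indep (\<Union>i\<in>S'. A i) = card S' + t - 1"
      using less.hyps[of S'] cS' gt S'sub less.prems(3) by simp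
    have up: "mrank indep (\<Union>i\<in>insert j S'. A i) \<le> mrank indep (\<Union>i\<in>S'. A i) + 1"
      using up_inc[OF sp t S'sub jr jS'] cS' gt by simp
    have "{1..r} - S' - {j} = {1..r} - S" using SS by blast
    moreover have "card ({1..r} - S) = r - card S" using less.prems(1) by (simp add: card_Diff_subset finS)
    ultimately have "t - 1 \<le> card ({1..r} - S' - {j})" using less.prems(3) by simp
    hence low: "mrank indep (\<Union>i\<in>S'. A i) + 1 \<le> mrank indep (\<Union>i\<in>insert j S'. A i)"
      using low_inc[OF sp t S'sub jr jS'] by simp
    have e: "mrank indep (\<Union>i\<in>S. A i) = mrank indep (\<Union>i\<in>S'. A i) + 1"
      using up low SS by (metis le_antisym)
    show ?thesis using e IH cS' gt t by arith
  qed
qed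

lemma rank_E:
  assumes sp: "spike t r E indep A" and t: "t > 0" and r: "2 * t \<le> r"
  shows "mrank indep E = r"
proof -
  have M: "matroid E indep" using sp_p1[OF sp] .
  obtain S0 where S0: "S0 \<subseteq> {1..r}" "card S0 = t" using obtain_subset_with_card_n[of t "{1..r}"] r by auto
  let ?D = "\<Union>i\<in>S0. A i"
  have D: "cocircuit E indep ?D" using sp_cocirc[OF sp S0] .
  have fin0: "finite S0" using S0 finite_subset by blast
  have cK: "card ({1..r} - S0) = r - t" using S0 fin0 by (simp add: card_Diff_subset)
  have ED: "E - ?D = (\<Union>i\<in>{1..r} - S0. A i)" using sp_compl[OF sp S0(1)] .
  have rk: "mrank indep (E - ?D) = r - 1"
    using main_rank[OF sp t, of "{1..r} - S0"] cK r t ED by simp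
  have "S0 \<noteq> {}" using S0 t by auto
  then obtain i where i: "i \<in> S0" by blast
  have "card (A i) = 2" using sp_leg[OF sp] S0 i by blast
  then obtain x where x: "x \<in> A i" by fastforce
  have xD: "x \<in> ?D" using i x by blast
  have "mrank indep E \<le> mrank indep (insert x (E - ?D))" using cocircuit_ge[OF M D xD] .
  also have "\<dots> \<le> mrank indep (E - ?D) + 1" using rank_insert[OF M] .
  finally have "mrank indep E \<le> r" using rk r t by simp
  moreover have "mrank indep (E - ?D) < mrank indep E" using cocircuit_lt[OF M D] .
  ultimately show ?thesis using rk r t by simp
qed


theorem lemma6p4:
  fixes t r :: nat and E :: "'a set" and indep :: "'a set \<Rightarrow> bool"
    and A :: "nat \<Rightarrow> 'a set" and J K :: "nat set"
  assumes "t > 0"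
    and "spike t r E indep A"
    and "J \<union> K = {1..r}" and "J \<inter> K = {}"
    and "card J \<le> card K"
  shows "conn E indep (\<Union>j\<in>J. A j) =
           (if card J < t then 2 * int (card J) else 2 * int t - 2)"
proof -
  note t = assms(1) and sp = assms(2)
  have M: "matroid E indep" using sp_p1[OF sp] .
  have rt: "t \<le> r" using sp_p2[OF sp] .
  have Jsub: "J \<subseteq> {1..r}" using assms(3) by blast
  have Ksub: "K \<subseteq> {1..r}" using assms(3) by blast
  have K: "K = {1..r} - J" using assms(3,4) by blast
  have finJ: "finite J" using Jsub finite_subset by blast
  have finK: "finite K" using Ksub finite_subset by blast
  have cJK: "card J + card K = r" using card_Un_disjoint[OF finJ finK assms(4)] assms(3) by simp
  have EX: "E - (\<Union>j\<in>J. A j) = (\<Union>j\<in>K. A j)" using sp_compl[OF sp Jsub] K by simp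
  show ?thesis
  proof (cases "card J < t")
    case True
    have cd: "card ({1..r} - J) = r - card J" using Jsub finJ by (simp add: card_Diff_subset)
    obtain T where T: "T \<subseteq> {1..r} - J" "card T = t - card J"
    proof -
      have "t - card J \<le> card ({1..r} - J)" using cd rt by simp
      thus ?thesis using obtain_subset_with_card_n[of "t - card J" "{1..r} - J"] that by blast
    qed
    have finT: "finite T" using T(1) finite_subset by (metis finite_Diff finite_atLeastAtMost)
    have JT: "J \<inter> T = {}" using T by blast
    have cJT: "card (J \<union> T) = t" using card_Un_disjoint[OF finJ finT JT] T True by simp
    have JTsub: "J \<union> T \<subseteq> {1..r}" using Jsub T by blast
    have "T \<noteq> {}" using T True by auto
    then obtain j where j: "j \<in> T" by blast
    have jr: "j \<in> {1..r}" "j \<notin> J" using j T by blast+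
    have "card (A j) = 2" using sp_leg[OF sp jr(1)] .
    then obtain x where x: "x \<in> A j" by fastforce
    have xJ: "x \<notin> (\<Union>i\<in>J. A i)" using sp_disj[OF sp Jsub, of "{j}"] jr x by blast
    let ?C = "\<Union>i\<in>J \<union> T. A i"
    have C: "circuit E indep ?C" using sp_circ[OF sp JTsub cJT] .
    have D: "cocircuit E indep ?C" using sp_cocirc[OF sp JTsub cJT] .
    have xC: "x \<in> ?C" using x j by blast
    have sub: "(\<Union>i\<in>J. A i) \<subseteq> ?C - {x}" using xJ by blast
    have "indep (?C - {x})" using C xC unfolding circuit_def by blast
    hence Xi: "indep (\<Union>i\<in>J. A i)" using m_down[OF M _ sub] by blast
    have r1: "mrank indep (\<Union>i\<in>J. A i) = 2 * card J"
      using rank_indep[OF M Xi] sp_card[OF sp Jsub] by simp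
    have r2: "mrank indep (E - (\<Union>i\<in>J. A i)) = mrank indep E"
      using cocircuit_disj[OF M D xC sub] .
    show ?thesis unfolding conn_def using r1 r2 True by simp
  next
    case False
    have r2t: "2 * t \<le> r" using False assms(5) cJK by simp
    have r1: "mrank indep (\<Union>i\<in>J. A i) = card J + t - 1"
      using main_rank[OF sp t Jsub] False assms(5) cJK by simp
    have r2: "mrank indep (\<Union>i\<in>K. A i) = card K + t - 1"
      using main_rank[OF sp t Ksub] False assms(5) cJK by simp
    have r3: "mrank indep E = r" using rank_E[OF sp t r2t] .
    have "conn E indep (\<Union>j\<in>J. A j) = int (card J + t - 1) + int (card K + t - 1) - int r"
      unfolding conn_def using EX r1 r2 r3 by simp
    also have "\<dots> = 2 * int t - 2" using t cJK by simp
    finally show ?thesis using False by simp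
  qed
qed

end
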